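(* Let $\mathcal R$ be a partial $Z$-regulus and let $E\in\mathcal R$. Then the assignment $L\mapsto L\cap E$ is a bijection from the set of directrices of $\mathcal R$ onto the set of points of $E$. Consequently, each point of $E$ lies on a unique directrix of $\mathcal R$.
   Context: $K$ is a (not necessarily commutative) field with centre $Z$, and $V$ is a left vector space over $K$ of arbitrary (possibly infinite) dimension with $\dim V>2$. $\mathcal G:=\{X\le V\mid X\cong V/X\}$, assumed nonempty. Points are $1$-dimensional and lines are $2$-dimensional subspaces of $V$; two subspaces meet if they have a common point. Two elements $X,Y\in\mathcal G$ are distant if $V=X\oplus Y$. A partial $Z$-regulus is a subset $\mathcal R\subseteq\mathcal G$ such that (R1) the elements of $\mathcal R$ are mutually distant and $|\mathcal R|\ge 3$, and (R2) whenever a line meets three mutually distinct elements of $\mathcal R$, it meets all elements of $\mathcal R$. A directrix of $\mathcal R$ is a line meeting all elements of $\mathcal R$. *)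

theory Defs
  imports Main
begin

text \<open>The vector space V is the whole carrier type 'v,
with scalar multiplication sm (acting on the left).\<close>

definition left_vs :: "('k::division_ring \<Rightarrow> 'v::ab_group_add \<Rightarrow> 'v) \<Rightarrow> bool" where
  "left_vs sm \<longleftrightarrow>
     (\<forall>a x y. sm a (x + y) = sm a x + sm a y) \<and>
     (\<forall>a b x. sm (a + b) x = sm a x + sm b x) \<and>
     (\<forall>a b x. sm (a * b) x = sm a (sm b x)) \<and>
     (\<forall>x. sm 1 x = x)"

definition lsubspace :: "('k::division_ring \<Rightarrow> 'v::ab_group_add \<Rightarrow> 'v) \<Rightarrow> 'v set \<Rightarrow> bool" where
  "lsubspace sm X \<longleftrightarrow> 0 \<in> X \<and> (\<forall>x\<in>X. \<forall>y\<in>X. x + y \<in> X) \<and> (\<forall>a. \<forall>x\<in>X. sm a x \<in> X)"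

definition lspan :: "('k::division_ring \<Rightarrow> 'v::ab_group_add \<Rightarrow> 'v) \<Rightarrow> 'v set \<Rightarrow> 'v set" where
  "lspan sm S = \<Inter>{X. lsubspace sm X \<and> S \<subseteq> X}"

definition is_point :: "('k::division_ring \<Rightarrow> 'v::ab_group_add \<Rightarrow> 'v) \<Rightarrow> 'v set \<Rightarrow> bool" where
  "is_point sm P \<longleftrightarrow> (\<exists>v. v \<noteq> 0 \<and> P = lspan sm {v})"

definition is_line :: "('k::division_ring \<Rightarrow> 'v::ab_group_add \<Rightarrow> 'v) \<Rightarrow> 'v set \<Rightarrow> bool" where
  "is_line sm L \<longleftrightarrow> (\<exists>u w. u \<noteq> 0 \<and> w \<notin> lspan sm {u} \<and> L = lspan sm {u, w})"

definition dim_gt_2 :: "('k::division_ring \<Rightarrow> 'v::ab_group_add \<Rightarrow> 'v) \<Rightarrow> bool" where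
  "dim_gt_2 sm \<longleftrightarrow> (\<exists>u v w. u \<noteq> 0 \<and> v \<notin> lspan sm {u} \<and> w \<notin> lspan sm {u, v})"

definition lin_map :: "('k::division_ring \<Rightarrow> 'v::ab_group_add \<Rightarrow> 'v) \<Rightarrow> ('v \<Rightarrow> 'v) \<Rightarrow> bool" where
  "lin_map sm f \<longleftrightarrow> (\<forall>x y. f (x + y) = f x + f y) \<and> (\<forall>a x. f (sm a x) = sm a (f x))"

text \<open>X \<cong> V/X, expressed via the first isomorphism theorem: there is a linear
map V \<rightarrow> V with image X and kernel X (so V/X \<cong> image = X).\<close>
definition iso_quot :: "('k::division_ring \<Rightarrow> 'v::ab_group_add \<Rightarrow> 'v) \<Rightarrow> 'v set \<Rightarrow> bool" where
  "iso_quot sm X \<longleftrightarrow> (\<exists>g. lin_map sm g \<and> range g = X \<and> {v. g v = 0} = X)"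

definition GG :: "('k::division_ring \<Rightarrow> 'v::ab_group_add \<Rightarrow> 'v) \<Rightarrow> 'v set set" where
  "GG sm = {X. lsubspace sm X \<and> iso_quot sm X}"

definition meets :: "('k::division_ring \<Rightarrow> 'v::ab_group_add \<Rightarrow> 'v) \<Rightarrow> 'v set \<Rightarrow> 'v set \<Rightarrow> bool" where
  "meets sm X Y \<longleftrightarrow> (\<exists>P. is_point sm P \<and> P \<subseteq> X \<and> P \<subseteq> Y)"

definition distant :: "'v::ab_group_add set \<Rightarrow> 'v set \<Rightarrow> bool" where
  "distant X Y \<longleftrightarrow> X \<inter> Y = {0} \<and> (\<forall>v. \<exists>x\<in>X. \<exists>y\<in>Y. v = x + y)"

definition partial_regulus :: "('k::division_ring \<Rightarrow> 'v::ab_group_add \<Rightarrow> 'v) \<Rightarrow> 'v set set \<Rightarrow> bool" where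
  "partial_regulus sm R \<longleftrightarrow>
     R \<subseteq> GG sm \<and>
     (\<forall>X\<in>R. \<forall>Y\<in>R. X \<noteq> Y \<longrightarrow> distant X Y) \<and>
     (\<exists>A B C. A \<in> R \<and> B \<in> R \<and> C \<in> R \<and> A \<noteq> B \<and> A \<noteq> C \<and> B \<noteq> C) \<and>
     (\<forall>L. is_line sm L \<longrightarrow>
        (\<forall>A\<in>R. \<forall>B\<in>R. \<forall>C\<in>R. A \<noteq> B \<and> A \<noteq> C \<and> B \<noteq> C \<and>
            meets sm L A \<and> meets sm L B \<and> meets sm L C \<longrightarrow> (\<forall>X\<in>R. meets sm L X)))"

definition directrix :: "('k::division_ring \<Rightarrow> 'v::ab_group_add \<Rightarrow> 'v) \<Rightarrow> 'v set set \<Rightarrow> 'v set \<Rightarrow> bool" where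
  "directrix sm R L \<longleftrightarrow> is_line sm L \<and> (\<forall>X\<in>R. meets sm L X)"

end

theory Submission imports Defs begin

lemma vs_basic:
  assumes vs: "left_vs sm"
  shows "sm 0 x = 0" "sm a 0 = 0" "sm a (-x) = - sm a x" "sm (-a) x = - sm a x"
proof -
  have add: "\<And>a x y. sm a (x + y) = sm a x + sm a y" and adds: "\<And>a b x. sm (a + b) x = sm a x + sm b x"
    using vs by (auto simp: left_vs_def)
  show 0: "sm 0 x = 0" using adds[of 0 0 x] by simp
  show 1: "sm a 0 = 0" using add[of a 0 0] by simp
  show "sm a (-x) = - sm a x" using add[of a x "-x"] 1 by (simp add: add_eq_0_iff)
  show "sm (-a) x = - sm a x" using adds[of a "-a" x] 0 by (simp add: add_eq_0_iff)
qed

lemma vs_inv: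
  assumes vs: "left_vs sm" and "a \<noteq> 0"
  shows "sm (inverse a) (sm a x) = x"
proof -
  have "sm (inverse a) (sm a x) = sm (inverse a * a) x" using vs by (simp add: left_vs_def)
  also have "\<dots> = x" using assms by (simp add: left_vs_def)
  finally show ?thesis .
qed

lemma vs_zero:
  assumes vs: "left_vs sm" and "sm a x = 0" and "a \<noteq> 0" shows "x = 0"
  using vs_inv[OF vs assms(3), of x] assms(2) vs_basic(2)[OF vs] by simp

lemma lspan_sub: "lsubspace sm (lspan sm S)"
  unfolding lspan_def lsubspace_def by auto

lemma lspan_inc: "S \<subseteq> lspan sm S"
  unfolding lspan_def by auto

lemma lspan_min: "lsubspace sm X \<Longrightarrow> S \<subseteq> X \<Longrightarrow> lspan sm S \<subseteq> X"
  unfolding lspan_def by auto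

lemma span1:
  assumes vs: "left_vs sm" shows "lspan sm {v} = range (\<lambda>a. sm a v)"
proof
  have "lsubspace sm (range (\<lambda>a. sm a v))"
    unfolding lsubspace_def
  proof (intro conjI ballI allI)
    show "0 \<in> range (\<lambda>a. sm a v)" using vs_basic(1)[OF vs] by (metis rangeI)
  next
    fix x y assume "x \<in> range (\<lambda>a. sm a v)" "y \<in> range (\<lambda>a. sm a v)"
    then obtain a b where "x = sm a v" "y = sm b v" by auto
    then have "x + y = sm (a+b) v" using vs by (simp add: left_vs_def)
    then show "x + y \<in> range (\<lambda>a. sm a v)" by auto
  next
    fix c x assume "x \<in> range (\<lambda>a. sm a v)"
    then obtain a where "x = sm a v" by auto
    then have "sm c x = sm (c*a) v" using vs by (simp add: left_vs_def)
    then show "sm c x \<in> range (\<lambda>a. sm a v)" by auto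
  qed
  moreover have "v = sm 1 v" using vs by (simp add: left_vs_def)
  then have "v \<in> range (\<lambda>a. sm a v)" by blast
  ultimately show "lspan sm {v} \<subseteq> range (\<lambda>a. sm a v)" by (simp add: lspan_min)
next
  show "range (\<lambda>a. sm a v) \<subseteq> lspan sm {v}"
    using lspan_sub[of sm "{v}"] lspan_inc[of "{v}" sm] unfolding lsubspace_def by auto
qed

lemma span2:
  assumes vs: "left_vs sm" shows "lspan sm {x, y} = {sm a x + sm b y | a b. True}"
proof
  let ?S = "{sm a x + sm b y | a b. True}"
  have ax: "\<And>a x y. sm a (x + y) = sm a x + sm a y" "\<And>a b x. sm (a + b) x = sm a x + sm b x"
     "\<And>a b x. sm (a * b) x = sm a (sm b x)" "\<And>x. sm 1 x = x"
    using vs by (auto simp: left_vs_def)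
  have "lsubspace sm ?S"
    unfolding lsubspace_def
  proof (intro conjI ballI allI)
    have "0 = sm 0 x + sm 0 y" using vs_basic(1)[OF vs] by simp
    then show "0 \<in> ?S" by blast
  next
    fix u w assume "u \<in> ?S" "w \<in> ?S"
    then obtain a b c d where "u = sm a x + sm b y" "w = sm c x + sm d y" by auto
    then have "u + w = sm (a+c) x + sm (b+d) y" by (simp add: ax algebra_simps)
    then show "u + w \<in> ?S" by auto
  next
    fix c u assume "u \<in> ?S"
    then obtain a b where "u = sm a x + sm b y" by auto
    then have "sm c u = sm (c*a) x + sm (c*b) y" by (simp add: ax)
    then show "sm c u \<in> ?S" by auto
  qed
  moreover have "x = sm 1 x + sm 0 y" using ax vs_basic(1)[OF vs] by simp
  then have "x \<in> ?S" by blast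
  moreover have "y = sm 0 x + sm 1 y" using ax vs_basic(1)[OF vs] by simp
  then have "y \<in> ?S" by blast
  ultimately show "lspan sm {x, y} \<subseteq> ?S" by (simp add: lspan_min)
next
  show "{sm a x + sm b y | a b. True} \<subseteq> lspan sm {x, y}"
    using lspan_sub[of sm "{x,y}"] lspan_inc[of "{x,y}" sm] unfolding lsubspace_def by auto
qed

lemma pt_sub:
  assumes vs: "left_vs sm" and X: "lsubspace sm X" shows "lspan sm {v} \<subseteq> X \<longleftrightarrow> v \<in> X"
  using lspan_min[OF X, of "{v}"] lspan_inc[of "{v}" sm] by auto

lemma exchange:
  assumes vs: "left_vs sm" and y: "y \<in> lspan sm {x, u}" and ny: "y \<notin> lspan sm {x}"
  shows "lspan sm {x, y} = lspan sm {x, u}"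
proof -
  have ax: "\<And>a x y. sm a (x + y) = sm a x + sm a y" "\<And>a b x. sm (a + b) x = sm a x + sm b x"
     "\<And>a b x. sm (a * b) x = sm a (sm b x)" "\<And>x. sm 1 x = x"
    using vs by (auto simp: left_vs_def)
  obtain a b where yy: "y = sm a x + sm b u" using y span2[OF vs] by auto
  have b: "b \<noteq> 0"
  proof
    assume "b = 0" then have "y = sm a x" using yy vs_basic(1)[OF vs] by simp
    then show False using ny span1[OF vs] by auto
  qed
  have "sm (-(inverse b * a)) x + sm (inverse b) y = u"
    using yy b by (simp add: ax vs_basic[OF vs] vs_inv[OF vs b])
  then have "u \<in> lspan sm {x, y}" using span2[OF vs, of x y] by auto
  moreover have "x \<in> lspan sm {x, y}" using lspan_inc[of "{x,y}" sm] by auto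
  ultimately have 1: "lspan sm {x, u} \<subseteq> lspan sm {x, y}" by (simp add: lspan_min lspan_sub)
  have "lspan sm {x, y} \<subseteq> lspan sm {x, u}" using y lspan_inc[of "{x,u}" sm] by (simp add: lspan_min lspan_sub)
  with 1 show ?thesis by auto
qed

lemma line_span:
  assumes vs: "left_vs sm" and L: "is_line sm L" and x: "x \<in> L" "x \<noteq> 0" and y: "y \<in> L" "y \<notin> lspan sm {x}"
  shows "L = lspan sm {x, y}"
proof -
  obtain u w where uw: "u \<noteq> 0" "w \<notin> lspan sm {u}" "L = lspan sm {u, w}" using L is_line_def by blast
  have "\<exists>z. L = lspan sm {z, x}"
  proof (cases "x \<in> lspan sm {w}")
    case False
    have "lspan sm {w, x} = lspan sm {w, u}" using exchange[OF vs, of x w u] x False uw by (simp add: insert_commute)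
    then show ?thesis using uw by (metis insert_commute)
  next
    case True
    then obtain c where c: "x = sm c w" using span1[OF vs] by auto
    have c0: "c \<noteq> 0" using c x vs_basic(1)[OF vs] by auto
    have "x \<notin> lspan sm {u}"
    proof
      assume "x \<in> lspan sm {u}"
      then obtain d where "x = sm d u" using span1[OF vs] by auto
      then have "w = sm (inverse c * d) u" using c vs_inv[OF vs c0, of w] vs by (simp add: left_vs_def)
      then show False using uw span1[OF vs] by auto
    qed
    then have "lspan sm {u, x} = lspan sm {u, w}" using exchange[OF vs, of x u w] x uw by simp
    then show ?thesis using uw by metis
  qed
  then obtain z where z: "L = lspan sm {z, x}" by blast
  have "lspan sm {x, y} = lspan sm {x, z}" using exchange[OF vs, of y x z] y z by (simp add: insert_commute)
  then show ?thesis using z by (simp add: insert_commute)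
qed


lemma line_sub: "is_line sm L \<Longrightarrow> lsubspace sm L"
  unfolding is_line_def using lspan_sub by blast

lemma meets_iff:
  assumes vs: "left_vs sm" and "lsubspace sm L" "lsubspace sm X"
  shows "meets sm L X \<longleftrightarrow> (\<exists>v. v \<noteq> 0 \<and> v \<in> L \<and> v \<in> X)"
  unfolding meets_def is_point_def using pt_sub[OF vs assms(2)] pt_sub[OF vs assms(3)] by blast

lemma sub_diff: assumes vs: "left_vs sm" and X: "lsubspace sm X" and "x \<in> X" "y \<in> X" shows "x - y \<in> X"
proof -
  have "sm (-1) y = - y" using vs_basic(4)[OF vs, of 1 y] vs by (simp add: left_vs_def)
  then have "- y \<in> X" using X assms(4) unfolding lsubspace_def by metis
  then show ?thesis using X assms(3) unfolding lsubspace_def by (metis diff_conv_add_uminus)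
qed

lemma lineE:
  assumes vs: "left_vs sm" and L: "is_line sm L" and E: "lsubspace sm E" and F: "lsubspace sm F"
    and EF: "E \<inter> F = {0}" and m: "meets sm L F" and p: "p \<in> L" "p \<in> E" "p \<noteq> 0"
  shows "L \<inter> E = lspan sm {p}"
proof
  show "lspan sm {p} \<subseteq> L \<inter> E" using pt_sub[OF vs line_sub[OF L]] pt_sub[OF vs E] p by blast
next
  show "L \<inter> E \<subseteq> lspan sm {p}"
  proof
    fix q assume q: "q \<in> L \<inter> E"
    show "q \<in> lspan sm {p}"
    proof (rule ccontr)
      assume nq: "q \<notin> lspan sm {p}"
      have "L = lspan sm {p, q}" using line_span[OF vs L p(1) p(3)] q nq by blast
      also have "\<dots> \<subseteq> E" using lspan_min[OF E, of "{p, q}"] p(2) q by simp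
      finally have LE: "L \<subseteq> E" .
      obtain v where "v \<noteq> 0" "v \<in> L" "v \<in> F" using m meets_iff[OF vs line_sub[OF L] F] by blast
      then show False using LE EF by blast
    qed
  qed
qed

lemma uniq:
  assumes vs: "left_vs sm" and E: "lsubspace sm E" and F: "lsubspace sm F" and G: "lsubspace sm G"
    and EF: "E \<inter> F = {0}" and EG: "E \<inter> G = {0}" and FG: "F \<inter> G = {0}"
    and L: "is_line sm L" "meets sm L F" "meets sm L G"
    and L': "is_line sm L'" "meets sm L' F" "meets sm L' G"
    and p: "p \<in> L" "p \<in> L'" "p \<in> E" "p \<noteq> 0"
  shows "L = L'"
proof -
  have ax: "\<And>a x y. sm a (x + y) = sm a x + sm a y" "\<And>a b x. sm (a + b) x = sm a x + sm b x"
     "\<And>a b x. sm (a * b) x = sm a (sm b x)" "\<And>x. sm 1 x = x"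
    using vs by (auto simp: left_vs_def)
  have Fsm: "\<And>a x. x \<in> F \<Longrightarrow> sm a x \<in> F" using F unfolding lsubspace_def by blast
  have Gsm: "\<And>a x. x \<in> G \<Longrightarrow> sm a x \<in> G" using G unfolding lsubspace_def by blast
  have indep: "\<And>f g. f \<in> F \<Longrightarrow> g \<in> G \<Longrightarrow> g \<noteq> 0 \<Longrightarrow> g \<notin> lspan sm {f}"
  proof
    fix f g assume "f \<in> F" "g \<in> G" "g \<noteq> 0" "g \<in> lspan sm {f}"
    then obtain c where "g = sm c f" using span1[OF vs] by auto
    then have "g \<in> F" using Fsm \<open>f \<in> F\<close> by blast
    then show False using FG \<open>g \<in> G\<close> \<open>g \<noteq> 0\<close> by blast
  qed
  have decomp: "\<exists>a b f g. f \<in> F \<and> g \<in> G \<and> f \<in> M \<and> g \<in> M \<and> p = sm a f + sm b g \<and> M = lspan sm {f, g}"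
    if M: "is_line sm M" "meets sm M F" "meets sm M G" "p \<in> M" for M
  proof -
    obtain f where f: "f \<noteq> 0" "f \<in> M" "f \<in> F" using M meets_iff[OF vs line_sub[OF M(1)] F] by blast
    obtain g where g: "g \<noteq> 0" "g \<in> M" "g \<in> G" using M meets_iff[OF vs line_sub[OF M(1)] G] by blast
    have "M = lspan sm {f, g}" using line_span[OF vs M(1) f(2) f(1) g(2)] indep f g by blast
    then obtain a b where "p = sm a f + sm b g" using M(4) span2[OF vs] by auto
    then show ?thesis using f g \<open>M = lspan sm {f, g}\<close> by blast
  qed
  obtain a b f g where 1: "f \<in> F" "g \<in> G" "f \<in> L" "g \<in> L" "p = sm a f + sm b g" using decomp L p by blast
  obtain a' b' f' g' where 2: "f' \<in> F" "g' \<in> G" "f' \<in> L'" "g' \<in> L'" "p = sm a' f' + sm b' g'" using decomp L' p by blast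
  have "sm a f - sm a' f' = sm b' g' - sm b g" using 1(5) 2(5) by (simp add: algebra_simps)
  moreover have "sm a f - sm a' f' \<in> F" using sub_diff[OF vs F] Fsm 1 2 by blast
  moreover have "sm b' g' - sm b g \<in> G" using sub_diff[OF vs G] Gsm 1 2 by blast
  ultimately have "sm b' g' - sm b g \<in> F \<inter> G" "sm a f - sm a' f' \<in> F \<inter> G" by auto
  then have "sm a f - sm a' f' = 0" "sm b' g' - sm b g = 0" using FG by blast+
  then have e1: "sm a f = sm a' f'" and e2: "sm b g = sm b' g'" by auto
  have sL: "\<And>c x. x \<in> L \<Longrightarrow> sm c x \<in> L" using line_sub[OF L(1)] unfolding lsubspace_def by blast
  have sL': "\<And>c x. x \<in> L' \<Longrightarrow> sm c x \<in> L'" using line_sub[OF L'(1)] unfolding lsubspace_def by blast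
  have g0: "sm b g \<noteq> 0"
  proof
    assume "sm b g = 0"
    then have "p = sm a f" using 1(5) by simp
    then have "p \<in> F" using Fsm 1 by blast
    then show False using p EF by blast
  qed
  have f0: "sm a f \<noteq> 0"
  proof
    assume "sm a f = 0"
    then have "p = sm b g" using 1(5) by simp
    then have "p \<in> G" using Gsm 1 by blast
    then show False using p EG by blast
  qed
  have i0: "sm b g \<notin> lspan sm {sm a f}" using indep Fsm Gsm 1 g0 by blast
  have LL: "L = lspan sm {sm a f, sm b g}" using line_span[OF vs L(1) sL[OF 1(3)] f0 sL[OF 1(4)] i0] .
  moreover have "sm a f \<in> L'" using e1 sL'[OF 2(3)] by simp
  moreover have "sm b g \<in> L'" using e2 sL'[OF 2(4)] by simp
  ultimately have "L' = lspan sm {sm a f, sm b g}" using line_span[OF vs L'(1) _ f0 _ i0] by blast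
  with LL show ?thesis by simp
qed

lemma exist:
  assumes vs: "left_vs sm" and E: "lsubspace sm E" and F: "lsubspace sm F" and G: "lsubspace sm G"
    and EF: "E \<inter> F = {0}" and EG: "E \<inter> G = {0}" and FG: "distant F G"
    and p: "p \<in> E" "p \<noteq> 0"
  shows "\<exists>L. is_line sm L \<and> p \<in> L \<and> meets sm L E \<and> meets sm L F \<and> meets sm L G"
proof -
  obtain f g where fg: "f \<in> F" "g \<in> G" "p = f + g" using FG unfolding distant_def by blast
  have FG0: "F \<inter> G = {0}" using FG unfolding distant_def by blast
  have f0: "f \<noteq> 0"
  proof
    assume "f = 0"
    then have "p = g" using fg(3) by simp
    then have "p \<in> E \<inter> G" using p fg by blast
    then show False using EG p by blast
  qed
  have g0: "g \<notin> lspan sm {f}"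
  proof
    assume "g \<in> lspan sm {f}"
    then obtain c where "g = sm c f" using span1[OF vs] by auto
    then have "g \<in> F" using F fg unfolding lsubspace_def by blast
    then have "g = 0" using FG0 fg by blast
    then have "p = f" using fg(3) by simp
    then have "p \<in> E \<inter> F" using p fg by blast
    then show False using EF p by blast
  qed
  define L where "L = lspan sm {f, g}"
  have Ll: "is_line sm L" unfolding is_line_def L_def using f0 g0 by blast
  have "p = sm 1 f + sm 1 g" using fg vs by (simp add: left_vs_def)
  then have pL: "p \<in> L" unfolding L_def using span2[OF vs, of f g] by blast
  have fL: "f \<in> L" "g \<in> L" unfolding L_def using lspan_inc[of "{f,g}" sm] by auto
  have g00: "g \<noteq> 0" using g0 lspan_sub[of sm "{f}"] unfolding lsubspace_def by blast
  show ?thesis using Ll pL fL fg f0 g00 p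
      meets_iff[OF vs line_sub[OF Ll] E] meets_iff[OF vs line_sub[OF Ll] F] meets_iff[OF vs line_sub[OF Ll] G]
    by blast
qed

theorem lemma4p3:
  fixes sm :: "'k::division_ring \<Rightarrow> 'v::ab_group_add \<Rightarrow> 'v"
    and R :: "'v set set" and E :: "'v set"
  assumes "left_vs sm"
    and "dim_gt_2 sm"
    and "GG sm \<noteq> {}"
    and "partial_regulus sm R"
    and "E \<in> R"
  shows "bij_betw (\<lambda>L. L \<inter> E) {L. directrix sm R L} {P. is_point sm P \<and> P \<subseteq> E}
    \<and> (\<forall>P. is_point sm P \<and> P \<subseteq> E \<longrightarrow> (\<exists>!L. directrix sm R L \<and> P \<subseteq> L))"
proof -
  note vs = assms(1)
  note PRc = assms(4)[unfolded partial_regulus_def]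
  note PR1 = PRc[THEN conjunct1] and PR2 = PRc[THEN conjunct2, THEN conjunct1]
    and PR3 = PRc[THEN conjunct2, THEN conjunct2, THEN conjunct1]
    and PR4 = PRc[THEN conjunct2, THEN conjunct2, THEN conjunct2]
  have sub: "\<And>X. X \<in> R \<Longrightarrow> lsubspace sm X" using PR1 unfolding GG_def by blast
  have dist: "\<And>X Y. X \<in> R \<Longrightarrow> Y \<in> R \<Longrightarrow> X \<noteq> Y \<Longrightarrow> distant X Y" using PR2 by blast
  have int0: "\<And>X Y. X \<in> R \<Longrightarrow> Y \<in> R \<Longrightarrow> X \<noteq> Y \<Longrightarrow> X \<inter> Y = {0}" using dist unfolding distant_def by blast
  obtain F G where FG: "F \<in> R" "G \<in> R" "F \<noteq> E" "G \<noteq> E" "F \<noteq> G"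
  proof -
    obtain A B C where ABC: "A \<in> R" "B \<in> R" "C \<in> R" "A \<noteq> B" "A \<noteq> C" "B \<noteq> C" using PR3 by blast
    show ?thesis
    proof (cases "A = E")
      case True then show ?thesis using that[of B C] ABC by blast
    next
      case False
      show ?thesis
      proof (cases "B = E")
        case True then show ?thesis using that[of A C] ABC by blast
      next
        case False2: False
        then show ?thesis using that[of A B] ABC False by blast
      qed
    qed
  qed
  have E: "lsubspace sm E" and F: "lsubspace sm F" and G: "lsubspace sm G" using sub FG assms(5) by auto
  have EF: "E \<inter> F = {0}" and EG: "E \<inter> G = {0}" and FG0: "F \<inter> G = {0}"
    using int0[OF assms(5) FG(1)] int0[OF assms(5) FG(2)] int0[OF FG(1) FG(2)] FG by auto
  have dFG: "distant F G" using dist FG by blast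
  have R2: "\<And>L. is_line sm L \<Longrightarrow> meets sm L E \<Longrightarrow> meets sm L F \<Longrightarrow> meets sm L G \<Longrightarrow> directrix sm R L"
  proof -
    fix L assume L: "is_line sm L" "meets sm L E" "meets sm L F" "meets sm L G"
    have H: "\<forall>A\<in>R. \<forall>B\<in>R. \<forall>C\<in>R. A \<noteq> B \<and> A \<noteq> C \<and> B \<noteq> C \<and>
            meets sm L A \<and> meets sm L B \<and> meets sm L C \<longrightarrow> (\<forall>X\<in>R. meets sm L X)"
      using PR4 L(1) by blast
    have c: "E \<noteq> F \<and> E \<noteq> G \<and> F \<noteq> G \<and> meets sm L E \<and> meets sm L F \<and> meets sm L G" using FG L by auto
    have "\<forall>X\<in>R. meets sm L X" using H[rule_format, OF assms(5) FG(1) FG(2) c] by blast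
    then show "directrix sm R L" unfolding directrix_def using L by blast
  qed
  have ptE: "\<And>P. is_point sm P \<and> P \<subseteq> E \<longleftrightarrow> (\<exists>p. p \<noteq> 0 \<and> p \<in> E \<and> P = lspan sm {p})"
    unfolding is_point_def using pt_sub[OF vs E] by blast
  have dirE: "\<And>L. directrix sm R L \<Longrightarrow> \<exists>p. p \<noteq> 0 \<and> p \<in> L \<and> p \<in> E \<and> L \<inter> E = lspan sm {p}"
  proof -
    fix L assume d: "directrix sm R L"
    then have L: "is_line sm L" "meets sm L E" "meets sm L F" using FG assms(5) unfolding directrix_def by auto
    obtain p where "p \<noteq> 0" "p \<in> L" "p \<in> E" using L meets_iff[OF vs line_sub[OF L(1)] E] by blast
    then show "\<exists>p. p \<noteq> 0 \<and> p \<in> L \<and> p \<in> E \<and> L \<inter> E = lspan sm {p}"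
      using lineE[OF vs L(1) E F EF L(3)] by blast
  qed
  have U: "\<And>L L' p. directrix sm R L \<Longrightarrow> directrix sm R L' \<Longrightarrow> p \<in> L \<Longrightarrow> p \<in> L' \<Longrightarrow> p \<in> E \<Longrightarrow> p \<noteq> 0 \<Longrightarrow> L = L'"
    using uniq[OF vs E F G EF EG FG0] FG unfolding directrix_def by blast
  have X: "\<And>p. p \<in> E \<Longrightarrow> p \<noteq> 0 \<Longrightarrow> \<exists>L. directrix sm R L \<and> p \<in> L"
    using exist[OF vs E F G EF EG dFG] R2 by blast
  have inL: "\<And>L p. directrix sm R L \<Longrightarrow> lspan sm {p} \<subseteq> L \<longleftrightarrow> p \<in> L"
    using pt_sub[OF vs] line_sub unfolding directrix_def by blast
  have part1: "bij_betw (\<lambda>L. L \<inter> E) {L. directrix sm R L} {P. is_point sm P \<and> P \<subseteq> E}"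
  proof (rule bij_betw_imageI)
    show "inj_on (\<lambda>L. L \<inter> E) {L. directrix sm R L}"
    proof (rule inj_onI)
      fix L L' assume "L \<in> {L. directrix sm R L}" "L' \<in> {L. directrix sm R L}" "L \<inter> E = L' \<inter> E"
      then show "L = L'" using dirE U by (metis IntD1 Int_iff mem_Collect_eq)
    qed
  next
    show "(\<lambda>L. L \<inter> E) ` {L. directrix sm R L} = {P. is_point sm P \<and> P \<subseteq> E}"
    proof
      show "(\<lambda>L. L \<inter> E) ` {L. directrix sm R L} \<subseteq> {P. is_point sm P \<and> P \<subseteq> E}"
      proof
        fix P assume "P \<in> (\<lambda>L. L \<inter> E) ` {L. directrix sm R L}"
        then obtain L where L: "directrix sm R L" "P = L \<inter> E" by blast
        obtain p where "p \<noteq> 0" "p \<in> E" "L \<inter> E = lspan sm {p}" using dirE[OF L(1)] by blast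
        then have "is_point sm P \<and> P \<subseteq> E" using ptE L(2) by blast
        then show "P \<in> {P. is_point sm P \<and> P \<subseteq> E}" by simp
      qed
    next
      show "{P. is_point sm P \<and> P \<subseteq> E} \<subseteq> (\<lambda>L. L \<inter> E) ` {L. directrix sm R L}"
      proof
        fix P assume "P \<in> {P. is_point sm P \<and> P \<subseteq> E}"
        then have "is_point sm P \<and> P \<subseteq> E" by simp
        then obtain p where p: "p \<noteq> 0" "p \<in> E" "P = lspan sm {p}" using ptE[of P] by blast
        obtain L where L: "directrix sm R L" "p \<in> L" using X[OF p(2) p(1)] by blast
        have Ll: "is_line sm L" "meets sm L F" using L(1) FG(1) unfolding directrix_def by auto
        have "L \<inter> E = P" using lineE[OF vs Ll(1) E F EF Ll(2) L(2) p(2) p(1)] p(3) by simp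
        then show "P \<in> (\<lambda>L. L \<inter> E) ` {L. directrix sm R L}" using L by blast
      qed
    qed
  qed
  have part2: "\<forall>P. is_point sm P \<and> P \<subseteq> E \<longrightarrow> (\<exists>!L. directrix sm R L \<and> P \<subseteq> L)"
  proof (intro allI impI)
    fix P assume "is_point sm P \<and> P \<subseteq> E"
    then obtain p where p: "p \<noteq> 0" "p \<in> E" "P = lspan sm {p}" using ptE[of P] by blast
    obtain L where L: "directrix sm R L" "p \<in> L" using X[OF p(2) p(1)] by blast
    show "\<exists>!L. directrix sm R L \<and> P \<subseteq> L"
    proof (rule ex1I[of _ L])
      show "directrix sm R L \<and> P \<subseteq> L" using L inL[OF L(1), of p] p(3) by simp
    next
      fix L' assume "directrix sm R L' \<and> P \<subseteq> L'"
      then have "p \<in> L'" using inL[of L' p] p(3) by simp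
      then show "L' = L" using U[OF _ L(1) _ L(2) p(2) p(1)] \<open>directrix sm R L' \<and> P \<subseteq> L'\<close> by blast
    qed
  qed
  show ?thesis using part1 part2 by blast
qed

end
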